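(* Let $n\ge1$ and radii $R_1,\dots,R_n>0$. For a Kaluza–Klein mode $\underline m=(\underline m_1,\dots,\underline m_n)\in\mathbb{Z}_{\ge0}^n\setminus\{0\}$ set $v_i=2\pi\underline m_i/R_i$ and $|v|^2=\sum_i v_i^2$. In the compactified Lagrangian (see context), the quadratic (coupling-independent) part for the mode $\underline m$ gives: the vector field $A^{(\underline m)a}_\mu$ squared mass $|v|^2$; and the $n$ scalars $A^{(\underline m)a}_{\bar\mu}$ ($\bar\mu=5,\dots,4+n$) the mass matrix $M=|v|^2 I_n-vv^{T}$, which is real symmetric with eigenvalue $0$ of multiplicity one (eigenvector $v$) and eigenvalue $|v|^2$ of multiplicity $n-1$. Consequently, organizing modes into KK towers according to which Fourier indices are nonzero (one tower per nonempty subset of $\{1,\dots,n\}$ for each field type), the compactified theory contains one massless gauge vector field $A^{(0,\dots,0)a}_\mu$, $2^n-1$ KK towers of massive vector fields, $2^n-1$ KK towers of massless (pseudo-Goldstone) scalar fields, and $(2^n-1)(n-1)$ KK towers of massive scalar fields, each massive field of mode $\underline m$ having squared mass $\sum_i(2\pi\underline m_i/R_i)^2$.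
   Context: Setting: pure $SU(N)$ Yang–Mills theory on $\mathcal{M}^4\times(S^1/Z_2)^n$ with Lagrangian $-\tfrac14\mathcal{F}^a_{MN}\mathcal{F}^{MN}_a$, $\mathcal{F}^a_{MN}=\partial_M\mathcal{A}^a_N-\partial_N\mathcal{A}^a_M+g_mf^{abc}\mathcal{A}^b_M\mathcal{A}^c_N$, fields periodic in $y^i$ with period $R_i$, $\mathcal{A}_\mu$ even and $\mathcal{A}_{\bar\mu}$ odd under $y\to-y$, expanded as $\mathcal{A}^a_\mu=P^{-1/2}A^{(0)a}_\mu+(2/P)^{1/2}\sum'A^{(\underline m)a}_\mu\cos\theta_{\underline m}$, $\mathcal{A}^a_{\bar\mu}=(2/P)^{1/2}\sum'A^{(\underline m)a}_{\bar\mu}\sin\theta_{\underline m}$ with $\theta_{\underline m}=2\pi\sum_i\underline m_iy^i/R_i$, $P=\prod R_i$, $\sum'$ over $\mathbb{Z}_{\ge0}^n\setminus\{0\}$. The compactified Lagrangian is the integral of the Lagrangian over $y\in\prod_i[0,R_i]$, a function of the four-dimensional fields $A^{(0)a}_\mu$, $A^{(\underline m)a}_\mu$, $A^{(\underline m)a}_{\bar\mu}$. Extra dimensions are spacelike. Massless scalars are called pseudo-Goldstone bosons. *)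

theory Defs
  imports "HOL-Analysis.Analysis"
begin

text \<open>Extra dimensions are indexed by a finite type 'n (so n = CARD('n) \<ge> 1).
  Points of the torus box: y :: real^'n; radii R :: real^'n; KK modes m :: nat^'n
  (elements of Z_{\<ge>0}^n).\<close>

definition theta :: "real^'n \<Rightarrow> nat^'n \<Rightarrow> real^'n \<Rightarrow> real" where
  "theta R m y = 2 * pi * (\<Sum>i\<in>UNIV. real (m$i) * y$i / R$i)"

definition vol :: "real^'n \<Rightarrow> real" where
  "vol R = (\<Prod>i\<in>UNIV. R$i)"

definition kk_v :: "real^'n \<Rightarrow> nat^'n \<Rightarrow> real^'n" where
  "kk_v R m = (\<chi> i. 2 * pi * real (m$i) / R$i)"

definition sqnorm :: "real^'n \<Rightarrow> real" where
  "sqnorm v = (\<Sum>i\<in>UNIV. (v$i)^2)"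

definition mass_matrix :: "real^'n \<Rightarrow> real^'n^'n" where
  "mass_matrix v = (\<chi> i j. sqnorm v * (if i = j then 1 else 0) - v$i * v$j)"

definition eigenspace :: "real^'n^'n \<Rightarrow> real \<Rightarrow> (real^'n) set" where
  "eigenspace M lam = {x. M *v x = lam *\<^sub>R x}"

definition pd :: "'n::finite \<Rightarrow> (real^'n \<Rightarrow> real) \<Rightarrow> real^'n \<Rightarrow> real" where
  "pd i f y = deriv (\<lambda>t. f (\<chi> k. if k = i then t else y$k)) (y$i)"

text \<open>Odd (extra-dimensional) field component A_j, expanded in the (finitely many)
  modes of S with 4D values a m $ j, at a fixed 4D point and fixed gauge index.\<close>
definition odd_field :: "real^'n \<Rightarrow> (nat^'n) set \<Rightarrow> (nat^'n \<Rightarrow> real^'n) \<Rightarrow> 'n \<Rightarrow> real^'n \<Rightarrow> real" where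
  "odd_field R S a j y = sqrt (2 / vol R) * (\<Sum>m\<in>S. (a m)$j * sin (theta R m y))"

text \<open>Even field component A_mu (fixed mu and gauge index): zero mode b0 plus modes of S.\<close>
definition even_field :: "real^'n \<Rightarrow> real \<Rightarrow> (nat^'n) set \<Rightarrow> (nat^'n \<Rightarrow> real) \<Rightarrow> real^'n \<Rightarrow> real" where
  "even_field R b0 S b y = b0 / sqrt (vol R) + sqrt (2 / vol R) * (\<Sum>m\<in>S. b m * cos (theta R m y))"

text \<open>Coupling-independent, 4D-derivative-free quadratic part of the compactified Lagrangian:
  scalar part  -1/4 F_{mubar nubar} F^{mubar nubar} (abelian part, extra dims spacelike),
  vector mass part coming from -1/2 F_{mu nubar} F^{mu nubar} \<supseteq> +1/2 d_nubar A_mu d_nubar A^mu,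
  integrated over the box prod_i [0,R_i].\<close>
definition scalar_quad :: "real^'n \<Rightarrow> (nat^'n) set \<Rightarrow> (nat^'n \<Rightarrow> real^'n) \<Rightarrow> real" where
  "scalar_quad R S a = integral (cbox 0 R)
     (\<lambda>y. -(1/4) * (\<Sum>i\<in>UNIV. \<Sum>j\<in>UNIV.
        (pd i (odd_field R S a j) y - pd j (odd_field R S a i) y)^2))"

definition vector_quad :: "real^'n \<Rightarrow> real \<Rightarrow> (nat^'n) set \<Rightarrow> (nat^'n \<Rightarrow> real) \<Rightarrow> real" where
  "vector_quad R b0 S b = integral (cbox 0 R)
     (\<lambda>y. (1/2) * (\<Sum>i\<in>UNIV. (pd i (even_field R b0 S b) y)^2))"

definition tower :: "'n set \<Rightarrow> (nat^'n) set" where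
  "tower T = {m. {i. m$i \<noteq> 0} = T}"

end

theory Submission
  imports Defs
begin


lemma sqnorm_inner: "sqnorm v = v \<bullet> v"
  by (simp add: sqnorm_def inner_vec_def power2_eq_square)

lemma mass_mult: "mass_matrix v *v x = sqnorm v *\<^sub>R x - (v \<bullet> x) *\<^sub>R v"
proof -
  have "(mass_matrix v *v x) $ i = sqnorm v * x $ i - (v \<bullet> x) * v $ i" for i
  proof -
    have "(mass_matrix v *v x) $ i = (\<Sum>j\<in>UNIV. (if i = j then sqnorm v * x$j else 0) - v$i * (v$j * x$j))"
      unfolding mass_matrix_def matrix_vector_mult_def vec_lambda_beta by (rule sum.cong) (auto simp: algebra_simps)
    also have "\<dots> = (\<Sum>j\<in>UNIV. (if i = j then sqnorm v * x$j else 0)) - (\<Sum>j\<in>UNIV. v$i * (v$j * x$j))"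
      by (rule sum_subtractf)
    also have "\<dots> = sqnorm v * x $ i - v$i * (\<Sum>j\<in>UNIV. v$j * x$j)"
      by (simp add: sum_distrib_left)
    finally show ?thesis by (simp add: inner_vec_def mult.commute)
  qed
  then show ?thesis by (simp add: vec_eq_iff)
qed

lemma eig0:
  assumes "sqnorm v > 0"
  shows "eigenspace (mass_matrix v) 0 = span {v}"
proof -
  have "x \<in> eigenspace (mass_matrix v) 0 \<longleftrightarrow> (\<exists>c. x = c *\<^sub>R v)" for x
  proof
    assume "x \<in> eigenspace (mass_matrix v) 0"
    then have "sqnorm v *\<^sub>R x = (v \<bullet> x) *\<^sub>R v" by (simp add: eigenspace_def mass_mult)
    then have h: "sqnorm v *\<^sub>R x = (v \<bullet> x) *\<^sub>R v" .
    have "x = (1 / sqnorm v) *\<^sub>R (sqnorm v *\<^sub>R x)" using assms by simp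
    also have "\<dots> = ((v \<bullet> x) / sqnorm v) *\<^sub>R v" by (simp only: h scaleR_scaleR) simp
    finally have "x = ((v \<bullet> x) / sqnorm v) *\<^sub>R v" .
    then show "\<exists>c. x = c *\<^sub>R v" by blast
  next
    assume "\<exists>c. x = c *\<^sub>R v"
    then obtain c where "x = c *\<^sub>R v" by blast
    then show "x \<in> eigenspace (mass_matrix v) 0"
      by (simp add: eigenspace_def mass_mult sqnorm_inner)
  qed
  then show ?thesis by (auto simp: span_singleton)
qed

lemma eigs:
  assumes "sqnorm v > 0"
  shows "eigenspace (mass_matrix v) (sqnorm v) = {x. v \<bullet> x = 0}"
  using assms by (auto simp: eigenspace_def mass_mult sqnorm_inner)

lemma dim_eigs:
  assumes "sqnorm v > 0"
  shows "dim (eigenspace (mass_matrix (v::real^'n)) (sqnorm v)) = CARD('n) - 1"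
proof -
  have "v \<noteq> 0" using assms by (auto simp: sqnorm_inner)
  then show ?thesis using eigs[OF assms] dim_hyperplane[of v] by simp
qed

lemma dim_eig0:
  assumes "sqnorm v > 0"
  shows "dim (eigenspace (mass_matrix (v::real^'n)) 0) = 1"
proof -
  have "v \<noteq> 0" using assms by (auto simp: sqnorm_inner)
  then have "independent {v}" by simp
  then have "dim {v} = 1" using dim_eq_card_independent by fastforce
  then show ?thesis using eig0[OF assms] by simp
qed

lemma det_mass:
  assumes "sqnorm v > 0"
  shows "det (t *\<^sub>R mat 1 - mass_matrix (v::real^'n)) = t * (t - sqnorm v) ^ (CARD('n) - 1)"
proof -
  define s where "s = sqnorm v"
  have nv: "norm v > 0" using assms by (simp add: sqnorm_inner norm_eq_sqrt_inner)
  have s2: "s = norm v * norm v" by (simp add: s_def sqnorm_inner flip: dot_square_norm power2_eq_square)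
  obtain k :: 'n where True by blast
  obtain A where A: "orthogonal_matrix A" "A *v (axis k 1) = v /\<^sub>R norm v"
    using orthogonal_matrix_exists_basis[of "v /\<^sub>R norm v" k] nv by auto
  have AtA: "transpose A ** A = mat 1" using A(1) by (simp add: orthogonal_matrix_def)
  have AAt: "A ** transpose A = mat 1" using A(1) by (simp add: orthogonal_matrix_def)
  have Atv: "transpose A *v v = norm v *\<^sub>R axis k 1"
  proof -
    have "v = norm v *\<^sub>R (A *v axis k 1)" using A(2) nv by simp
    then have "transpose A *v v = norm v *\<^sub>R ((transpose A ** A) *v axis k 1)"
      by (metis matrix_vector_mul_assoc matrix_vector_mult_scaleR)
    then show ?thesis using AtA by simp
  qed
  define D :: "real^'n^'n" where "D = (\<chi> i j. if i = j then (if i = k then t else t - s) else 0)"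
  have eq: "transpose A ** (t *\<^sub>R mat 1 - mass_matrix v) ** A = D"
  proof (subst matrix_eq, intro allI)
    fix x :: "real^'n"
    have "v \<bullet> (A *v x) = (transpose A *v v) \<bullet> x"
      by (simp add: dot_lmul_matrix)
    also have "\<dots> = norm v * x $ k" using Atv by (simp add: inner_axis')
    finally have vx: "v \<bullet> (A *v x) = norm v * x $ k" .
    have "(transpose A ** (t *\<^sub>R mat 1 - mass_matrix v) ** A) *v x
        = transpose A *v (t *\<^sub>R (A *v x) - (s *\<^sub>R (A *v x) - (v \<bullet> (A *v x)) *\<^sub>R v))"
      by (simp add: matrix_vector_mul_assoc[symmetric] matrix_vector_mult_diff_rdistrib mass_mult s_def
           matrix_vector_mult_scaleR flip: scaleR_matrix_vector_assoc)
    also have "\<dots> = t *\<^sub>R x - s *\<^sub>R x + (norm v * x $ k * norm v) *\<^sub>R axis k 1"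
      by (simp add: vx matrix_vector_mult_diff_distrib matrix_vector_right_distrib
          matrix_vector_mult_scaleR matrix_vector_mul_assoc AtA Atv[simplified] algebra_simps)
    also have "\<dots> = D *v x"
    proof -
      have "(D *v x)$i = (\<Sum>j\<in>UNIV. if i = j then (if i = k then t else t - s) * x$j else 0)" for i
        unfolding D_def matrix_vector_mult_def vec_lambda_beta by (rule sum.cong) auto
      then show ?thesis by (auto simp: vec_eq_iff axis_def s2 algebra_simps)
    qed
    finally show "(transpose A ** (t *\<^sub>R mat 1 - mass_matrix v) ** A) *v x = D *v x" .
  qed
  have dA: "det A * det A = 1" using det_orthogonal_matrix[OF A(1)] by auto
  have "det D = det (transpose A ** (t *\<^sub>R mat 1 - mass_matrix v) ** A)"
    by (simp only: eq)
  also have "\<dots> = (det A * det A) * det (t *\<^sub>R mat 1 - mass_matrix v)"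
    by (simp only: det_mul det_transpose mult_ac)
  finally have "det D = det (t *\<^sub>R mat 1 - mass_matrix v)" using dA by simp
  moreover have "det D = t * (t - s) ^ (CARD('n) - 1)"
  proof -
    have "det D = (\<Prod>i\<in>UNIV. D $ i $ i)" by (rule det_diagonal) (simp add: D_def)
    also have "\<dots> = D $ k $ k * (\<Prod>i\<in>UNIV - {k}. D $ i $ i)"
      by (simp add: prod.remove)
    also have "(\<Prod>i\<in>UNIV - {k}. D $ i $ i) = (\<Prod>i\<in>UNIV - {k}. t - s)"
      by (rule prod.cong) (auto simp: D_def)
    finally show ?thesis by (simp add: D_def card_Diff_singleton)
  qed
  ultimately show ?thesis by (simp add: s_def)
qed

lemma mass_sym: "transpose (mass_matrix v) = mass_matrix v"
  by (simp add: transpose_def mass_matrix_def vec_eq_iff mult.commute)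

lemma mass_v: "mass_matrix v *v v = 0"
  by (simp add: mass_mult sqnorm_inner)



lemma card_nonempty: "card {T::'n::finite set. T \<noteq> {}} = 2 ^ CARD('n) - 1"
proof -
  have "{T::'n set. T \<noteq> {}} = Pow UNIV - {{}}" by auto
  then show ?thesis by (simp add: card_Diff_singleton card_Pow)
qed

lemma tower_uniq: "(m::nat^'n) \<noteq> 0 \<longleftrightarrow> (\<exists>!T. T \<noteq> {} \<and> m \<in> tower T)"
proof -
  have t: "m \<in> tower T \<longleftrightarrow> T = {i. m$i \<noteq> 0}" for T by (auto simp: tower_def)
  have "(\<exists>!T. T \<noteq> {} \<and> m \<in> tower T) \<longleftrightarrow> {i. m$i \<noteq> 0} \<noteq> {}"
  proof
    assume "\<exists>!T. T \<noteq> {} \<and> m \<in> tower T"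
    then obtain T where "T \<noteq> {}" "m \<in> tower T" by blast
    then show "{i. m$i \<noteq> 0} \<noteq> {}" using t by simp
  next
    assume a: "{i. m$i \<noteq> 0} \<noteq> {}"
    show "\<exists>!T. T \<noteq> {} \<and> m \<in> tower T"
    proof (rule ex1I[of _ "{i. m$i \<noteq> 0}"])
      show "{i. m$i \<noteq> 0} \<noteq> {} \<and> m \<in> tower {i. m$i \<noteq> 0}" using a t by simp
      show "\<And>T. T \<noteq> {} \<and> m \<in> tower T \<Longrightarrow> T = {i. m$i \<noteq> 0}" using t by simp
    qed
  qed
  moreover have "{i. m$i \<noteq> 0} \<noteq> {} \<longleftrightarrow> m \<noteq> 0"
  proof -
    have "{i. m$i \<noteq> 0} \<noteq> {} \<longleftrightarrow> (\<exists>i. m$i \<noteq> 0)" by blast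
    also have "\<dots> \<longleftrightarrow> m \<noteq> 0" by (simp add: vec_eq_iff)
    finally show ?thesis .
  qed
  ultimately show ?thesis by simp
qed

lemma tower_ne: "(T::'n::finite set) \<noteq> {} \<Longrightarrow> tower T \<noteq> {}"
proof -
  assume "T \<noteq> {}"
  have "(\<chi> i. if i \<in> T then (1::nat) else 0) \<in> tower T" by (auto simp: tower_def)
  then show ?thesis by blast
qed

lemma kk0: "sqnorm (kk_v R (0::nat^'n)) = 0"
  by (simp add: sqnorm_def kk_v_def)

lemma kkpos:
  assumes "\<forall>i. R$i > (0::real)" "(m::nat^'n) \<noteq> 0"
  shows "sqnorm (kk_v R m) > 0"
proof -
  obtain i where i: "m $ i \<noteq> 0" using assms(2) by (auto simp: vec_eq_iff)
  have "(kk_v R m $ i)^2 > 0" using i assms(1)[rule_format, of i] by (simp add: kk_v_def)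
  moreover have "(kk_v R m $ i)^2 \<le> sqnorm (kk_v R m)"
    unfolding sqnorm_def by (rule member_le_sum) auto
  ultimately show ?thesis by linarith
qed

lemma kkv: "sqnorm (kk_v R m) = (\<Sum>i\<in>UNIV. (2 * pi * real (m$i) / R$i)^2)"
  by (simp add: sqnorm_def kk_v_def)


lemma shift_int:
  fixes f :: "real^'n \<Rightarrow> real" and R :: "real^'n"
  assumes cf: "continuous_on UNIV f" and Rpos: "\<forall>i. R$i > 0"
    and per: "\<And>y. f (y + R$j *\<^sub>R axis j 1) = f y"
    and c: "0 \<le> c" "c \<le> R$j"
  shows "((\<lambda>y. f (y + c *\<^sub>R axis j 1)) has_integral integral (cbox 0 R) f) (cbox 0 R)"
proof -
  define e :: "real^'n" where "e = axis j 1"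
  define Rc :: "real^'n" where "Rc = (\<chi> i. if i = j then c else R$i)"
  have int: "(f has_integral integral (cbox a b) f) (cbox a b)" for a b
    by (rule integrable_integral, rule integrable_continuous, rule continuous_on_subset[OF cf]) auto
  have eB: "e \<in> Basis" by (simp add: e_def)
  have ie: "x \<bullet> e = x $ j" for x by (simp add: e_def inner_axis)
  have ie': "{x. x \<bullet> e \<le> d} = {x. x $ j \<le> d}" "{x. d \<le> x \<bullet> e} = {x. x $ j \<ge> d}" for d
    by (simp_all add: ie)
  have s1: "cbox 0 R \<inter> {x. x \<bullet> e \<le> c} = cbox 0 Rc"
  proof -
    have "(\<chi> i. if i = j then min (R$j) c else R$i) = Rc" using c by (simp add: Rc_def vec_eq_iff)
    then show ?thesis unfolding ie'(1) interval_split_cart(1)[unfolded interval_cbox_cart] by simp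
  qed
  have s2: "cbox 0 R \<inter> {x. c \<le> x \<bullet> e} = cbox (c *\<^sub>R e) R"
  proof -
    have "(\<chi> i. if i = j then max ((0::real^'n)$j) c else (0::real^'n)$i) = c *\<^sub>R e" using c by (simp add: e_def vec_eq_iff axis_def)
    then show ?thesis unfolding ie'(2) interval_split_cart(2) by (simp add: interval_cbox_cart)
  qed
  have full: "(f has_integral (integral (cbox 0 Rc) f + integral (cbox (c *\<^sub>R e) R) f)) (cbox 0 R)"
    by (rule has_integral_split[OF _ _ eB, of _ _ _ _ c]) (simp_all add: s1 s2 int)
  have t1: "cbox (c *\<^sub>R e) (R + c *\<^sub>R e) \<inter> {x. x \<bullet> e \<le> R$j} = cbox (c *\<^sub>R e) R"
  proof -
    have "(\<chi> i. if i = j then min ((R + c *\<^sub>R e)$j) (R$j) else (R + c *\<^sub>R e)$i) = R" using c by (simp add: e_def vec_eq_iff axis_def)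
    then show ?thesis unfolding ie'(1) interval_split_cart(1)[unfolded interval_cbox_cart] by simp
  qed
  have t2: "cbox (c *\<^sub>R e) (R + c *\<^sub>R e) \<inter> {x. R$j \<le> x \<bullet> e} = cbox (R$j *\<^sub>R e) (Rc + R$j *\<^sub>R e)"
  proof -
    have "(\<chi> i. if i = j then max ((c *\<^sub>R e)$j) (R$j) else (c *\<^sub>R e)$i) = R$j *\<^sub>R e" using c by (simp add: e_def vec_eq_iff axis_def)
    moreover have "R + c *\<^sub>R e = Rc + R$j *\<^sub>R e" by (simp add: e_def vec_eq_iff axis_def Rc_def)
    ultimately show ?thesis unfolding ie'(2) interval_split_cart(2) by (simp add: interval_cbox_cart)
  qed
  have "((\<lambda>x. f (1 *\<^sub>R x + (- (R$j *\<^sub>R e)))) has_integral (integral (cbox 0 Rc) f /\<^sub>R 1 ^ DIM(real^'n)))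
      (cbox ((0 - (- (R$j *\<^sub>R e))) /\<^sub>R 1) ((Rc - (- (R$j *\<^sub>R e))) /\<^sub>R 1))"
    by (rule has_integral_affinity'[OF int]) simp
  moreover have "f (1 *\<^sub>R x + (- (R$j *\<^sub>R e))) = f x" for x
    using per[of "x - R$j *\<^sub>R e"] by (simp add: e_def)
  ultimately have up: "(f has_integral integral (cbox 0 Rc) f) (cbox (R$j *\<^sub>R e) (Rc + R$j *\<^sub>R e))"
    by simp
  have full2: "(f has_integral (integral (cbox (c *\<^sub>R e) R) f + integral (cbox 0 Rc) f)) (cbox (c *\<^sub>R e) (R + c *\<^sub>R e))"
    by (rule has_integral_split[OF _ _ eB, of _ _ _ _ "R$j"]) (simp_all add: t1 t2 int up)
  have "((\<lambda>x. f (1 *\<^sub>R x + c *\<^sub>R e)) has_integral ((integral (cbox (c *\<^sub>R e) R) f + integral (cbox 0 Rc) f) /\<^sub>R 1 ^ DIM(real^'n)))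
      (cbox ((c *\<^sub>R e - c *\<^sub>R e) /\<^sub>R 1) ((R + c *\<^sub>R e - c *\<^sub>R e) /\<^sub>R 1))"
    by (rule has_integral_affinity'[OF full2]) simp
  then have "((\<lambda>x. f (x + c *\<^sub>R e)) has_integral (integral (cbox 0 Rc) f + integral (cbox (c *\<^sub>R e) R) f)) (cbox 0 R)"
    by (simp add: add.commute)
  moreover have "integral (cbox 0 R) f = integral (cbox 0 Rc) f + integral (cbox (c *\<^sub>R e) R) f"
    using full by (rule integral_unique)
  ultimately show ?thesis by (simp add: e_def)
qed

definition thi :: "real^'n \<Rightarrow> ('n \<Rightarrow> int) \<Rightarrow> real^'n \<Rightarrow> real" where
  "thi R k y = 2 * pi * (\<Sum>i\<in>UNIV. real_of_int (k i) * y$i / R$i)"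

lemma cont_thi: "continuous_on UNIV (\<lambda>y. cos (thi R k y + p))"
proof -
  have e: "(\<lambda>y. thi R k y + p) = (\<lambda>y. 2 * pi * (\<Sum>i\<in>UNIV. (real_of_int (k i) / R$i) * y$i) + p)"
    by (simp add: thi_def fun_eq_iff)
  have "continuous_on UNIV (\<lambda>y. 2 * pi * (\<Sum>i\<in>UNIV. (real_of_int (k i) / R$i) * y$i) + p)"
    by (intro continuous_intros)
  then have "continuous_on UNIV (\<lambda>y. thi R k y + p)" by (simp only: e)
  then show ?thesis by (rule continuous_on_cos)
qed

lemma cos_per: "cos (z + 2 * pi * real_of_int n) = cos z"
  by (simp add: cos_add)

lemma thi_shift: "thi R k (y + d *\<^sub>R axis j 1) = thi R k y + 2 * pi * (real_of_int (k j) * d / R$j)"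
proof -
  have "thi R k (y + d *\<^sub>R axis j 1) = 2 * pi * (\<Sum>i\<in>UNIV. real_of_int (k i) * y$i / R$i
      + (if i = j then real_of_int (k j) * d / R$j else 0))"
    unfolding thi_def by (intro arg_cong[where f="\<lambda>x. 2 * pi * x"] sum.cong) (auto simp: axis_def algebra_simps add_divide_distrib)
  then show ?thesis by (simp add: sum.distrib thi_def algebra_simps)
qed

lemma cos_int_zero:
  assumes Rpos: "\<forall>i. R$i > 0" and kj: "k j \<noteq> 0"
  shows "((\<lambda>y. cos (thi R k y + p)) has_integral 0) (cbox 0 R)"
proof -
  define f where "f = (\<lambda>y. cos (thi R k y + p))"
  have cf: "continuous_on UNIV f" unfolding f_def by (rule cont_thi)
  have per: "f (y + R$j *\<^sub>R axis j 1) = f y" for y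
  proof -
    have "thi R k (y + R$j *\<^sub>R axis j 1) + p = (thi R k y + p) + 2 * pi * real_of_int (k j)"
      using Rpos[rule_format, of j] by (simp add: thi_shift)
    then show ?thesis unfolding f_def by (simp only: cos_per)
  qed
  define c where "c = R$j / (2 * \<bar>real_of_int (k j)\<bar>)"
  have ak0: "(1::int) \<le> \<bar>k j\<bar>" using kj by (simp add: abs_if) 
  have ak: "\<bar>real_of_int (k j)\<bar> \<ge> 1"
  proof -
    have "real_of_int 1 \<le> real_of_int \<bar>k j\<bar>" using ak0 by (simp only: of_int_le_iff)
    then show ?thesis by simp
  qed
  have c0: "0 \<le> c" using Rpos[rule_format, of j] by (simp add: c_def)
  have c1: "c \<le> R$j"
  proof -
    have "R$j / (2 * \<bar>real_of_int (k j)\<bar>) \<le> R$j / 1"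
      using Rpos[rule_format, of j] ak by (intro divide_left_mono) auto
    then show ?thesis by (simp add: c_def)
  qed
  have neg: "f (y + c *\<^sub>R axis j 1) = - f y" for y
  proof -
    have Rj: "R$j \<noteq> 0" using Rpos[rule_format, of j] by simp
    have kr: "real_of_int (k j) \<noteq> 0" using kj by simp
    have "real_of_int (k j) * c / R$j = real_of_int (k j) / (2 * \<bar>real_of_int (k j)\<bar>)"
      unfolding c_def using Rj by simp
    also have "\<dots> = sgn (real_of_int (k j)) / 2"
    proof (cases "real_of_int (k j) > 0")
      case True
      then show ?thesis by simp
    next
      case False
      then have "real_of_int (k j) < 0" using kr by linarith
      then show ?thesis by simp
    qed
    finally have "real_of_int (k j) * c / R$j = sgn (real_of_int (k j)) / 2" .
    then have "thi R k (y + c *\<^sub>R axis j 1) + p = (thi R k y + p) + pi * sgn (real_of_int (k j))"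
      by (simp only: thi_shift)
    then have h: "thi R k (y + c *\<^sub>R axis j 1) + p = (thi R k y + p) + pi * sgn (real_of_int (k j))" .
    show ?thesis
    proof (cases "k j > 0")
      case True
      then have "sgn (real_of_int (k j)) = 1" by simp
      with h have "thi R k (y + c *\<^sub>R axis j 1) + p = (thi R k y + p) + pi" by simp
      then show ?thesis unfolding f_def by (simp only: cos_periodic_pi)
    next
      case False
      then have "sgn (real_of_int (k j)) = -1" using kj by simp
      with h have "thi R k (y + c *\<^sub>R axis j 1) + p = (thi R k y + p) - pi" by simp
      then show ?thesis unfolding f_def by (simp only: cos_minus_pi)
    qed
  qed
  have "((\<lambda>y. f (y + c *\<^sub>R axis j 1)) has_integral integral (cbox 0 R) f) (cbox 0 R)"
    by (rule shift_int[OF cf Rpos per c0 c1])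
  then have "((\<lambda>y. - f y) has_integral integral (cbox 0 R) f) (cbox 0 R)" by (simp add: neg)
  then have "((\<lambda>y. - (- f y)) has_integral - integral (cbox 0 R) f) (cbox 0 R)"
    by (rule has_integral_neg)
  then have "(f has_integral - integral (cbox 0 R) f) (cbox 0 R)" by simp
  then have "integral (cbox 0 R) f = - integral (cbox 0 R) f" by (rule integral_unique)
  then have "integral (cbox 0 R) f = 0" by simp
  moreover have "(f has_integral integral (cbox 0 R) f) (cbox 0 R)"
    by (rule integrable_integral, rule integrable_continuous, rule continuous_on_subset[OF cf]) auto
  ultimately show ?thesis by (simp add: f_def)
qed

lemma content_box: "\<forall>i. R$i > 0 \<Longrightarrow> measure lborel (cbox 0 R) = vol R"
proof -
  assume Rpos: "\<forall>i. R$i > 0"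
  have "0 \<in> cbox 0 R" using Rpos by (simp add: mem_box_cart less_imp_le)
  then have "cbox 0 R \<noteq> {}" by blast
  then show ?thesis by (simp add: content_cbox_cart vol_def)
qed

lemma cos_int:
  assumes Rpos: "\<forall>i. R$i > 0"
  shows "((\<lambda>y. cos (thi R k y + p)) has_integral (if k = (\<lambda>_. 0) then cos p * vol R else 0)) (cbox 0 R)"
proof (cases "k = (\<lambda>_. 0)")
  case True
  then have "thi R k y = 0" for y by (simp add: thi_def)
  then show ?thesis using True has_integral_const[of "cos p" 0 R] content_box[OF Rpos] by (simp add: mult.commute)
next
  case False
  then obtain j where "k j \<noteq> 0" by auto
  then show ?thesis using cos_int_zero[OF Rpos] False by simp
qed

lemma theta_thi: "theta R m y = thi R (\<lambda>i. int (m$i)) y"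
  by (simp add: theta_def thi_def)

lemma thi_diff: "thi R (\<lambda>i. int (m$i)) y - thi R (\<lambda>i. int (m'$i)) y = thi R (\<lambda>i. int (m$i) - int (m'$i)) y"
  by (simp add: thi_def algebra_simps sum_subtractf diff_divide_distrib flip: sum_divide_distrib)

lemma thi_add: "thi R (\<lambda>i. int (m$i)) y + thi R (\<lambda>i. int (m'$i)) y = thi R (\<lambda>i. int (m$i) + int (m'$i)) y"
  by (simp add: thi_def algebra_simps sum.distrib add_divide_distrib)

lemma orth_cos:
  assumes Rpos: "\<forall>i. R$i > 0" and m: "(m::nat^'n) \<noteq> 0" and m': "m' \<noteq> 0"
  shows "((\<lambda>y. cos (theta R m y) * cos (theta R m' y)) has_integral (if m = m' then vol R / 2 else 0)) (cbox 0 R)"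
proof -
  have e: "cos (theta R m y) * cos (theta R m' y) =
     (cos (thi R (\<lambda>i. int (m$i) - int (m'$i)) y + 0) + cos (thi R (\<lambda>i. int (m$i) + int (m'$i)) y + 0)) / 2" for y
    by (simp add: cos_times_cos theta_thi thi_diff thi_add)
  have k1: "((\<lambda>i. int (m$i) - int (m'$i)) = (\<lambda>_. 0)) = (m = m')"
    by (auto simp: vec_eq_iff fun_eq_iff)
  have k2: "(\<lambda>i. int (m$i) + int (m'$i)) \<noteq> (\<lambda>_. 0)"
  proof
    assume "(\<lambda>i. int (m$i) + int (m'$i)) = (\<lambda>_. 0)"
    then have "m$i = 0" for i by (metis add_eq_0_iff_both_eq_0 of_nat_0_eq_iff of_nat_add)
    then show False using m by (simp add: vec_eq_iff)
  qed
  have h1: "((\<lambda>y. cos (thi R (\<lambda>i. int (m$i) - int (m'$i)) y + 0)) has_integral (if m = m' then vol R else 0)) (cbox 0 R)"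
    using cos_int[OF Rpos, of "\<lambda>i. int (m$i) - int (m'$i)" 0] k1 by (simp only: cos_zero mult_1_left)
  have h2: "((\<lambda>y. cos (thi R (\<lambda>i. int (m$i) + int (m'$i)) y + 0)) has_integral 0) (cbox 0 R)"
    using cos_int[OF Rpos, of "\<lambda>i. int (m$i) + int (m'$i)" 0] k2 by (simp only: if_False)
  have "((\<lambda>y. (cos (thi R (\<lambda>i. int (m$i) - int (m'$i)) y + 0) + cos (thi R (\<lambda>i. int (m$i) + int (m'$i)) y + 0)) / 2)
     has_integral ((if m = m' then vol R else 0) + 0) / 2) (cbox 0 R)"
    by (rule has_integral_divide[OF has_integral_add[OF h1 h2]])
  then have "((\<lambda>y. cos (theta R m y) * cos (theta R m' y)) has_integral ((if m = m' then vol R else 0) + 0) / 2) (cbox 0 R)"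
    by (simp only: e)
  moreover have "((if m = m' then vol R else 0) + 0) / 2 = (if m = m' then vol R / 2 else 0)"
     "((if m = m' then vol R else 0) - 0) / 2 = (if m = m' then vol R / 2 else 0)" by simp_all
  ultimately show ?thesis by (simp only:)
qed

lemma orth_sin:
  assumes Rpos: "\<forall>i. R$i > 0" and m: "(m::nat^'n) \<noteq> 0" and m': "m' \<noteq> 0"
  shows "((\<lambda>y. sin (theta R m y) * sin (theta R m' y)) has_integral (if m = m' then vol R / 2 else 0)) (cbox 0 R)"
proof -
  have e: "sin (theta R m y) * sin (theta R m' y) =
     (cos (thi R (\<lambda>i. int (m$i) - int (m'$i)) y + 0) - cos (thi R (\<lambda>i. int (m$i) + int (m'$i)) y + 0)) / 2" for y
    by (simp add: sin_times_sin theta_thi thi_diff thi_add)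
  have k1: "((\<lambda>i. int (m$i) - int (m'$i)) = (\<lambda>_. 0)) = (m = m')"
    by (auto simp: vec_eq_iff fun_eq_iff)
  have k2: "(\<lambda>i. int (m$i) + int (m'$i)) \<noteq> (\<lambda>_. 0)"
  proof
    assume "(\<lambda>i. int (m$i) + int (m'$i)) = (\<lambda>_. 0)"
    then have "m$i = 0" for i by (metis add_eq_0_iff_both_eq_0 of_nat_0_eq_iff of_nat_add)
    then show False using m by (simp add: vec_eq_iff)
  qed
  have h1: "((\<lambda>y. cos (thi R (\<lambda>i. int (m$i) - int (m'$i)) y + 0)) has_integral (if m = m' then vol R else 0)) (cbox 0 R)"
    using cos_int[OF Rpos, of "\<lambda>i. int (m$i) - int (m'$i)" 0] k1 by (simp only: cos_zero mult_1_left)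
  have h2: "((\<lambda>y. cos (thi R (\<lambda>i. int (m$i) + int (m'$i)) y + 0)) has_integral 0) (cbox 0 R)"
    using cos_int[OF Rpos, of "\<lambda>i. int (m$i) + int (m'$i)" 0] k2 by (simp only: if_False)
  have "((\<lambda>y. (cos (thi R (\<lambda>i. int (m$i) - int (m'$i)) y + 0) - cos (thi R (\<lambda>i. int (m$i) + int (m'$i)) y + 0)) / 2)
     has_integral ((if m = m' then vol R else 0) - 0) / 2) (cbox 0 R)"
    by (rule has_integral_divide[OF has_integral_diff[OF h1 h2]])
  then have "((\<lambda>y. sin (theta R m y) * sin (theta R m' y)) has_integral ((if m = m' then vol R else 0) - 0) / 2) (cbox 0 R)"
    by (simp only: e)
  moreover have "((if m = m' then vol R else 0) + 0) / 2 = (if m = m' then vol R / 2 else 0)"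
     "((if m = m' then vol R else 0) - 0) / 2 = (if m = m' then vol R / 2 else 0)" by simp_all
  ultimately show ?thesis by (simp only:)
qed

lemma sq_sum_int:
  assumes Rpos: "\<forall>i. R$i > 0" and S: "finite S" "0 \<notin> S"
    and orth: "\<And>m m'. m \<in> S \<Longrightarrow> m' \<in> S \<Longrightarrow>
       ((\<lambda>y. g m y * g m' y) has_integral (if m = m' then vol R / 2 else 0)) (cbox 0 R)"
  shows "((\<lambda>y. (\<Sum>m\<in>S. c m * g m y)^2) has_integral (vol R / 2 * (\<Sum>m\<in>S. (c m)^2))) (cbox 0 R)"
proof -
  have e: "(\<Sum>m\<in>S. c m * g m y)^2 = (\<Sum>m\<in>S. \<Sum>m'\<in>S. (c m * c m') * (g m y * g m' y))" for y
    by (simp add: power2_eq_square sum_product algebra_simps)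
  have "((\<lambda>y. \<Sum>m\<in>S. \<Sum>m'\<in>S. (c m * c m') * (g m y * g m' y)) has_integral
        (\<Sum>m\<in>S. \<Sum>m'\<in>S. (c m * c m') * (if m = m' then vol R / 2 else 0))) (cbox 0 R)"
    by (intro has_integral_sum S has_integral_mult_right orth)
  moreover have "(\<Sum>m\<in>S. \<Sum>m'\<in>S. (c m * c m') * (if m = m' then vol R / 2 else 0)) = vol R / 2 * (\<Sum>m\<in>S. (c m)^2)"
  proof -
    have "(\<Sum>m\<in>S. \<Sum>m'\<in>S. (c m * c m') * (if m = m' then vol R / 2 else 0)) = (\<Sum>m\<in>S. (c m * c m) * (vol R / 2))"
    proof (rule sum.cong[OF refl])
      fix m assume "m \<in> S"
      have "(\<Sum>m'\<in>S. (c m * c m') * (if m = m' then vol R / 2 else 0)) = (\<Sum>m'\<in>S. if m = m' then c m * c m' * (vol R / 2) else 0)"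
        by (intro sum.cong) auto
      also have "\<dots> = c m * c m * (vol R / 2)" using \<open>m \<in> S\<close> S by (simp add: sum.delta)
      finally show "(\<Sum>m'\<in>S. (c m * c m') * (if m = m' then vol R / 2 else 0)) = c m * c m * (vol R / 2)" .
    qed
    then show ?thesis by (simp add: sum_distrib_left power2_eq_square algebra_simps)
  qed
  ultimately show ?thesis by (simp add: e)
qed


lemma upd_same: "(\<chi> k. if k = i then y$i else y$k) = y"
  by (simp add: vec_eq_iff)

lemma upd_eq: "(\<chi> k. if k = i then t else y$k) = y + (t - y$i) *\<^sub>R axis i 1"
  by (simp add: vec_eq_iff axis_def)

lemma d_theta: "((\<lambda>t. theta R m (\<chi> k. if k = i then t else y$k)) has_real_derivative (kk_v R m $ i)) (at t)"
proof -
  have e: "theta R m (\<chi> k. if k = i then t else y$k) = theta R m y + kk_v R m $ i * (t - y$i)" for t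
    by (simp add: upd_eq theta_thi thi_shift kk_v_def)
  have "((\<lambda>t. theta R m y + kk_v R m $ i * (t - y$i)) has_real_derivative (0 + kk_v R m $ i * (1 - 0))) (at t)"
    by (intro DERIV_add DERIV_const DERIV_cmult DERIV_diff DERIV_ident)
  then show ?thesis by (simp add: e)
qed

lemma pd_even: "pd i (even_field R b0 S b) y = - sqrt (2 / vol R) * (\<Sum>m\<in>S. (b m * kk_v R m $ i) * sin (theta R m y))"
proof -
  have "((\<lambda>t. even_field R b0 S b (\<chi> k. if k = i then t else y$k)) has_real_derivative
      0 + sqrt (2 / vol R) * (\<Sum>m\<in>S. b m * (- sin (theta R m (\<chi> k. if k = i then t else y$k)) * kk_v R m $ i))) (at t)" for t
    unfolding even_field_def
    by (intro DERIV_add DERIV_const DERIV_cmult DERIV_sum DERIV_fun_cos d_theta)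
  from DERIV_imp_deriv[OF this[of "y$i"]] have "pd i (even_field R b0 S b) y =
     sqrt (2 / vol R) * (\<Sum>m\<in>S. b m * (- sin (theta R m y) * kk_v R m $ i))"
    by (simp add: pd_def upd_same)
  also have "\<dots> = - sqrt (2 / vol R) * (\<Sum>m\<in>S. (b m * kk_v R m $ i) * sin (theta R m y))"
    by (simp add: sum_negf mult_ac)
  finally show ?thesis .
qed

lemma pd_odd: "pd i (odd_field R S a j) y = sqrt (2 / vol R) * (\<Sum>m\<in>S. ((a m)$j * kk_v R m $ i) * cos (theta R m y))"
proof -
  have "((\<lambda>t. odd_field R S a j (\<chi> k. if k = i then t else y$k)) has_real_derivative
      sqrt (2 / vol R) * (\<Sum>m\<in>S. (a m)$j * (cos (theta R m (\<chi> k. if k = i then t else y$k)) * kk_v R m $ i))) (at t)" for t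
    unfolding odd_field_def
    by (intro DERIV_cmult DERIV_sum DERIV_fun_sin d_theta)
  from DERIV_imp_deriv[OF this[of "y$i"]] show ?thesis
    by (simp add: pd_def upd_same mult_ac)
qed

lemma vol_pos: "\<forall>i. R$i > 0 \<Longrightarrow> vol R > 0"
  by (simp add: vol_def prod_pos)

lemma vector_part:
  assumes Rpos: "\<forall>i. R$i > 0" and S: "finite S" "0 \<notin> S"
  shows "vector_quad R b0 S b = (1/2) * (\<Sum>m\<in>S. sqnorm (kk_v R m) * (b m)^2)"
proof -
  have vp: "vol R > 0" by (rule vol_pos[OF Rpos])
  have e: "(1/2) * (\<Sum>i\<in>UNIV. (pd i (even_field R b0 S b) y)^2) =
     (\<Sum>i\<in>UNIV. (1 / vol R) * (\<Sum>m\<in>S. (b m * kk_v R m $ i) * sin (theta R m y))^2)" for y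
  proof -
    have "(pd i (even_field R b0 S b) y)^2 = (2 / vol R) * (\<Sum>m\<in>S. (b m * kk_v R m $ i) * sin (theta R m y))^2" for i
      unfolding pd_even power_mult_distrib using vp by simp
    then show ?thesis by (subst sum_distrib_left) (simp add: field_simps)
  qed
  have orth: "\<And>m m'. m \<in> S \<Longrightarrow> m' \<in> S \<Longrightarrow>
       ((\<lambda>y. sin (theta R m y) * sin (theta R m' y)) has_integral (if m = m' then vol R / 2 else 0)) (cbox 0 R)"
    using orth_sin[OF Rpos] S by metis
  have "((\<lambda>y. \<Sum>i\<in>UNIV. (1 / vol R) * (\<Sum>m\<in>S. (b m * kk_v R m $ i) * sin (theta R m y))^2) has_integral
     (\<Sum>i\<in>UNIV. (1 / vol R) * (vol R / 2 * (\<Sum>m\<in>S. (b m * kk_v R m $ i)^2)))) (cbox 0 R)"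
    by (intro has_integral_sum has_integral_mult_right sq_sum_int[OF Rpos S orth]) auto
  then have I: "((\<lambda>y. (1/2) * (\<Sum>i\<in>UNIV. (pd i (even_field R b0 S b) y)^2)) has_integral
     (\<Sum>i\<in>UNIV. (1 / vol R) * (vol R / 2 * (\<Sum>m\<in>S. (b m * kk_v R m $ i)^2)))) (cbox 0 R)"
    by (simp only: e)
  have X: "(\<Sum>i\<in>UNIV. (1 / vol R) * (vol R / 2 * (\<Sum>m\<in>S. (b m * kk_v R m $ i)^2)))
      = (1/2) * (\<Sum>m\<in>S. sqnorm (kk_v R m) * (b m)^2)"
    using vp by (simp add: sqnorm_def sum_distrib_left sum_distrib_right power_mult_distrib algebra_simps
      sum.swap[of _ UNIV S])
  from integral_unique[OF I] X show ?thesis unfolding vector_quad_def by (rule trans)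
qed

lemma antisym_id: "(\<Sum>i\<in>UNIV. \<Sum>j\<in>UNIV. ((a::real^'n)$j * v$i - a$i * v$j)^2) = 2 * ((a \<bullet> a) * (v \<bullet> v) - (a \<bullet> v)^2)"
proof -
  have pt: "(a$j * v$i - a$i * v$j)^2 = (a$j * a$j) * (v$i * v$i) + (a$i * a$i) * (v$j * v$j) - 2 * ((a$i * v$i) * (a$j * v$j))" for i j
    by (simp add: power2_eq_square algebra_simps)
  have X1: "(\<Sum>i\<in>UNIV. \<Sum>j\<in>UNIV. (a$j * a$j) * (v$i * v$i)) = (v \<bullet> v) * (a \<bullet> a)"
    unfolding inner_vec_def inner_real_def sum_product by (simp only: mult.commute)
  have X2: "(\<Sum>i\<in>UNIV. \<Sum>j\<in>UNIV. (a$i * a$i) * (v$j * v$j)) = (a \<bullet> a) * (v \<bullet> v)"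
    unfolding inner_vec_def inner_real_def sum_product ..
  have X3: "(\<Sum>i\<in>UNIV. \<Sum>j\<in>UNIV. (a$i * v$i) * (a$j * v$j)) = (a \<bullet> v) * (a \<bullet> v)"
    unfolding inner_vec_def inner_real_def sum_product ..
  have "(\<Sum>i\<in>UNIV. \<Sum>j\<in>UNIV. (a$j * v$i - a$i * v$j)^2) =
     (\<Sum>i\<in>UNIV. \<Sum>j\<in>UNIV. (a$j * a$j) * (v$i * v$i)) + (\<Sum>i\<in>UNIV. \<Sum>j\<in>UNIV. (a$i * a$i) * (v$j * v$j))
     - 2 * (\<Sum>i\<in>UNIV. \<Sum>j\<in>UNIV. (a$i * v$i) * (a$j * v$j))"
    by (simp only: pt sum.distrib sum_subtractf sum_distrib_left)
  also have "\<dots> = 2 * ((a \<bullet> a) * (v \<bullet> v) - (a \<bullet> v)^2)"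
    unfolding X1 X2 X3 by (simp add: power2_eq_square algebra_simps)
  finally show ?thesis .
qed

lemma scalar_part:
  assumes Rpos: "\<forall>i. R$i > 0" and S: "finite S" "0 \<notin> S"
  shows "scalar_quad R S a = -(1/2) * (\<Sum>m\<in>S. a m \<bullet> (mass_matrix (kk_v R m) *v a m))"
proof -
  have vp: "vol R > 0" by (rule vol_pos[OF Rpos])
  define c where "c = (\<lambda>i j m. (a m)$j * kk_v R m $ i - (a m)$i * kk_v R m $ j)"
  have e: "-(1/4) * (\<Sum>i\<in>UNIV. \<Sum>j\<in>UNIV. (pd i (odd_field R S a j) y - pd j (odd_field R S a i) y)^2) =
     (\<Sum>i\<in>UNIV. \<Sum>j\<in>UNIV. (- 1 / (2 * vol R)) * (\<Sum>m\<in>S. c i j m * cos (theta R m y))^2)" for y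
  proof -
    have dd: "pd i (odd_field R S a j) y - pd j (odd_field R S a i) y = sqrt (2 / vol R) * (\<Sum>m\<in>S. c i j m * cos (theta R m y))" for i j
      by (simp add: pd_odd c_def algebra_simps sum_subtractf sum_distrib_left)
    have "(pd i (odd_field R S a j) y - pd j (odd_field R S a i) y)^2 = (2 / vol R) * (\<Sum>m\<in>S. c i j m * cos (theta R m y))^2" for i j
      unfolding dd power_mult_distrib using vp by simp
    then show ?thesis by (simp add: sum_distrib_left field_simps)
  qed
  have orth: "\<And>m m'. m \<in> S \<Longrightarrow> m' \<in> S \<Longrightarrow>
       ((\<lambda>y. cos (theta R m y) * cos (theta R m' y)) has_integral (if m = m' then vol R / 2 else 0)) (cbox 0 R)"
    using orth_cos[OF Rpos] S by metis
  have "((\<lambda>y. \<Sum>i\<in>UNIV. \<Sum>j\<in>UNIV. (- 1 / (2 * vol R)) * (\<Sum>m\<in>S. c i j m * cos (theta R m y))^2) has_integral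
     (\<Sum>i\<in>UNIV. \<Sum>j\<in>UNIV. (- 1 / (2 * vol R)) * (vol R / 2 * (\<Sum>m\<in>S. (c i j m)^2)))) (cbox 0 R)"
    by (intro has_integral_sum has_integral_mult_right sq_sum_int[OF Rpos S orth]) auto
  then have I: "((\<lambda>y. -(1/4) * (\<Sum>i\<in>UNIV. \<Sum>j\<in>UNIV. (pd i (odd_field R S a j) y - pd j (odd_field R S a i) y)^2)) has_integral
     (\<Sum>i\<in>UNIV. \<Sum>j\<in>UNIV. (- 1 / (2 * vol R)) * (vol R / 2 * (\<Sum>m\<in>S. (c i j m)^2)))) (cbox 0 R)"
    by (simp only: e)
  have X1: "(\<Sum>i\<in>UNIV. \<Sum>j\<in>UNIV. (- 1 / (2 * vol R)) * (vol R / 2 * (\<Sum>m\<in>S. (c i j m)^2)))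
      = -(1/4) * (\<Sum>m\<in>S. \<Sum>i\<in>UNIV. \<Sum>j\<in>UNIV. (c i j m)^2)"
  proof -
    have h: "(- 1 / (2 * vol R)) * (vol R / 2 * X) = -(1/4) * X" for X using vp by (simp add: field_simps)
    have sw: "(\<Sum>i\<in>UNIV. \<Sum>j\<in>UNIV. \<Sum>m\<in>S. (c i j m)^2) = (\<Sum>m\<in>S. \<Sum>i\<in>UNIV. \<Sum>j\<in>UNIV. (c i j m)^2)"
    proof -
      have "(\<Sum>i\<in>UNIV. \<Sum>j\<in>UNIV. \<Sum>m\<in>S. (c i j m)^2) = (\<Sum>i\<in>UNIV. \<Sum>m\<in>S. \<Sum>j\<in>UNIV. (c i j m)^2)"
        by (rule sum.cong[OF refl], rule sum.swap)
      also have "\<dots> = (\<Sum>m\<in>S. \<Sum>i\<in>UNIV. \<Sum>j\<in>UNIV. (c i j m)^2)"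
        by (rule sum.swap)
      finally show ?thesis .
    qed
    show ?thesis unfolding h by (simp only: sum_distrib_left[symmetric] sw)
  qed
  have X2: "(\<Sum>i\<in>UNIV. \<Sum>j\<in>UNIV. (c i j m)^2) = 2 * (a m \<bullet> (mass_matrix (kk_v R m) *v a m))" for m
    unfolding c_def antisym_id
    by (simp add: mass_mult sqnorm_inner inner_diff_right inner_commute power2_eq_square algebra_simps)
  have X3: "-(1/4) * (\<Sum>m\<in>S. \<Sum>i\<in>UNIV. \<Sum>j\<in>UNIV. (c i j m)^2) = -(1/2) * (\<Sum>m\<in>S. a m \<bullet> (mass_matrix (kk_v R m) *v a m))"
    by (simp add: X2 sum_distrib_left)
  from integral_unique[OF I] X1 X3 show ?thesis unfolding scalar_quad_def by (simp only:)
qed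

theorem mainTheorem2:
  fixes R :: "real^'n"
  assumes Rpos: "\<forall>i. R$i > 0"
  shows
    "(\<forall>S b0 b. finite S \<and> 0 \<notin> S \<longrightarrow>
        vector_quad R b0 S b = (1/2) * (\<Sum>m\<in>S. sqnorm (kk_v R m) * (b m)^2))
   \<and> (\<forall>S a. finite S \<and> 0 \<notin> S \<longrightarrow>
        scalar_quad R S a = -(1/2) * (\<Sum>m\<in>S. a m \<bullet> (mass_matrix (kk_v R m) *v a m)))
   \<and> (\<forall>m::nat^'n. m \<noteq> 0 \<longrightarrow>
        (let v = kk_v R m; M = mass_matrix v in
           sqnorm v = (\<Sum>i\<in>UNIV. (2 * pi * real (m$i) / R$i)^2)
         \<and> sqnorm v > 0
         \<and> transpose M = M
         \<and> M *v v = 0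
         \<and> eigenspace M 0 = span {v}
         \<and> dim (eigenspace M 0) = 1
         \<and> dim (eigenspace M (sqnorm v)) = CARD('n) - 1
         \<and> (\<forall>t. det (t *\<^sub>R mat 1 - M) = t * (t - sqnorm v) ^ (CARD('n) - 1))))
   \<and> sqnorm (kk_v R 0) = 0
   \<and> card {T::'n set. T \<noteq> {}} = 2 ^ CARD('n) - 1
   \<and> (\<forall>m::nat^'n. m \<noteq> 0 \<longleftrightarrow> (\<exists>!T. T \<noteq> {} \<and> m \<in> tower T))
   \<and> (\<forall>T::'n set. T \<noteq> {} \<longrightarrow> tower T \<noteq> {})
   \<and> card {T::'n set. T \<noteq> {}} * (CARD('n) - 1) = (2 ^ CARD('n) - 1) * (CARD('n) - 1)"
proof -
  have P1: "\<forall>S b0 b. finite S \<and> 0 \<notin> S \<longrightarrow>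
        vector_quad R b0 S b = (1/2) * (\<Sum>m\<in>S. sqnorm (kk_v R m) * (b m)^2)"
  proof (intro allI impI)
    fix S :: "(nat^'n) set" and b0 b
    assume h: "finite S \<and> 0 \<notin> S"
    show "vector_quad R b0 S b = (1/2) * (\<Sum>m\<in>S. sqnorm (kk_v R m) * (b m)^2)"
      using vector_part[OF Rpos conjunct1[OF h] conjunct2[OF h]] .
  qed
  have P2: "\<forall>S a. finite S \<and> 0 \<notin> S \<longrightarrow>
        scalar_quad R S a = -(1/2) * (\<Sum>m\<in>S. a m \<bullet> (mass_matrix (kk_v R m) *v a m))"
  proof (intro allI impI)
    fix S :: "(nat^'n) set" and a
    assume h: "finite S \<and> 0 \<notin> S"
    show "scalar_quad R S a = -(1/2) * (\<Sum>m\<in>S. a m \<bullet> (mass_matrix (kk_v R m) *v a m))"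
      using scalar_part[OF Rpos conjunct1[OF h] conjunct2[OF h]] .
  qed
  have P3: "\<forall>m::nat^'n. m \<noteq> 0 \<longrightarrow>
        (let v = kk_v R m; M = mass_matrix v in
           sqnorm v = (\<Sum>i\<in>UNIV. (2 * pi * real (m$i) / R$i)^2)
         \<and> sqnorm v > 0
         \<and> transpose M = M
         \<and> M *v v = 0
         \<and> eigenspace M 0 = span {v}
         \<and> dim (eigenspace M 0) = 1
         \<and> dim (eigenspace M (sqnorm v)) = CARD('n) - 1
         \<and> (\<forall>t. det (t *\<^sub>R mat 1 - M) = t * (t - sqnorm v) ^ (CARD('n) - 1)))"
  proof (intro allI impI)
    fix m :: "nat^'n"
    assume m: "m \<noteq> 0"
    have sp: "sqnorm (kk_v R m) > 0" by (rule kkpos[OF Rpos m])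
    show "let v = kk_v R m; M = mass_matrix v in
           sqnorm v = (\<Sum>i\<in>UNIV. (2 * pi * real (m$i) / R$i)^2)
         \<and> sqnorm v > 0
         \<and> transpose M = M
         \<and> M *v v = 0
         \<and> eigenspace M 0 = span {v}
         \<and> dim (eigenspace M 0) = 1
         \<and> dim (eigenspace M (sqnorm v)) = CARD('n) - 1
         \<and> (\<forall>t. det (t *\<^sub>R mat 1 - M) = t * (t - sqnorm v) ^ (CARD('n) - 1))"
      unfolding Let_def
    proof (intro conjI allI)
      show "sqnorm (kk_v R m) = (\<Sum>i\<in>UNIV. (2 * pi * real (m$i) / R$i)^2)" by (rule kkv)
      show "sqnorm (kk_v R m) > 0" by (rule sp)
      show "transpose (mass_matrix (kk_v R m)) = mass_matrix (kk_v R m)" by (rule mass_sym)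
      show "mass_matrix (kk_v R m) *v kk_v R m = 0" by (rule mass_v)
      show "eigenspace (mass_matrix (kk_v R m)) 0 = span {kk_v R m}" by (rule eig0[OF sp])
      show "dim (eigenspace (mass_matrix (kk_v R m)) 0) = 1" by (rule dim_eig0[OF sp])
      show "dim (eigenspace (mass_matrix (kk_v R m)) (sqnorm (kk_v R m))) = CARD('n) - 1" by (rule dim_eigs[OF sp])
      fix t
      show "det (t *\<^sub>R mat 1 - mass_matrix (kk_v R m)) = t * (t - sqnorm (kk_v R m)) ^ (CARD('n) - 1)"
        by (rule det_mass[OF sp])
    qed
  qed
  have P6: "\<forall>m::nat^'n. m \<noteq> 0 \<longleftrightarrow> (\<exists>!T. T \<noteq> {} \<and> m \<in> tower T)"
    by (intro allI) (rule tower_uniq)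
  have P7: "\<forall>T::'n set. T \<noteq> {} \<longrightarrow> tower T \<noteq> {}"
    by (intro allI impI) (rule tower_ne)
  have P8: "card {T::'n set. T \<noteq> {}} * (CARD('n) - 1) = (2 ^ CARD('n) - 1) * (CARD('n) - 1)"
    by (simp only: card_nonempty)
  show ?thesis
    by (intro conjI P1 P2 P3 P6 P7 P8 kk0 card_nonempty)
qed

end
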